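(* Let $K$ be a finite simplicial complex with a hereditary ordering $\succ$, and let $r$ be a positive integer. Suppose that for any two simplices $\sigma,\tau\in K$ with $\dim\sigma=\dim\tau\ge r$ and $\mu(\sigma)=\mu(\tau)$ we have $\sigma\cup\tau\in K$. Then $K$ collapses on a subcomplex of dimension less than $r$.
   Context: $K$ is a finite simplicial complex (family of subsets of a finite vertex set containing $\emptyset$, closed under subsets); $\dim\sigma=|\sigma|-1$. For a strict total ordering $\succ$ of $K$ and non-empty $\sigma$, $\mu(\sigma)$ is the $\succ$-largest facet (codimension-one face) of $\sigma$; $\succ$ is hereditary if $\sigma\succ\tau$ whenever $\dim\sigma>\dim\tau$, and $\sigma\succ\tau$ whenever $\mu(\sigma)\succ\mu(\tau)$. A pair of non-empty simplices $(\sigma,\tau)$ is a free pair of $K$ if $\tau$ is a facet of $\sigma$ and $K\setminus\{\sigma,\tau\}$ is a simplicial complex; removing it is an elementary collapse. $K$ collapses on a subcomplex $L$ if $L$ is obtained from $K$ by a finite sequence of elementary collapses. *)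

theory Defs
  imports Main
begin

definition simplicial_complex :: "'a set set \<Rightarrow> bool" where
  "simplicial_complex K \<longleftrightarrow> finite K \<and> (\<forall>\<sigma>\<in>K. finite \<sigma>) \<and> {} \<in> K \<and>
     (\<forall>\<sigma>\<in>K. \<forall>\<tau>. \<tau> \<subseteq> \<sigma> \<longrightarrow> \<tau> \<in> K)"

definition sdim :: "'a set \<Rightarrow> int" where
  "sdim \<sigma> = int (card \<sigma>) - 1"

definition facets :: "'a set \<Rightarrow> 'a set set" where
  "facets \<sigma> = {\<tau>. \<tau> \<subseteq> \<sigma> \<and> card \<tau> + 1 = card \<sigma>}"

definition strict_total_order_on :: "'a set set \<Rightarrow> ('a set \<Rightarrow> 'a set \<Rightarrow> bool) \<Rightarrow> bool" where
  "strict_total_order_on K gt \<longleftrightarrow>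
     (\<forall>\<sigma>\<in>K. \<not> gt \<sigma> \<sigma>) \<and>
     (\<forall>\<sigma>\<in>K. \<forall>\<tau>\<in>K. \<forall>\<rho>\<in>K. gt \<sigma> \<tau> \<longrightarrow> gt \<tau> \<rho> \<longrightarrow> gt \<sigma> \<rho>) \<and>
     (\<forall>\<sigma>\<in>K. \<forall>\<tau>\<in>K. \<sigma> \<noteq> \<tau> \<longrightarrow> gt \<sigma> \<tau> \<or> gt \<tau> \<sigma>)"

definition mu :: "('a set \<Rightarrow> 'a set \<Rightarrow> bool) \<Rightarrow> 'a set \<Rightarrow> 'a set" where
  "mu gt \<sigma> = (THE \<tau>. \<tau> \<in> facets \<sigma> \<and> (\<forall>\<rho>\<in>facets \<sigma>. \<rho> \<noteq> \<tau> \<longrightarrow> gt \<tau> \<rho>))"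

definition hereditary :: "'a set set \<Rightarrow> ('a set \<Rightarrow> 'a set \<Rightarrow> bool) \<Rightarrow> bool" where
  "hereditary K gt \<longleftrightarrow> strict_total_order_on K gt \<and>
     (\<forall>\<sigma>\<in>K. \<forall>\<tau>\<in>K. sdim \<sigma> > sdim \<tau> \<longrightarrow> gt \<sigma> \<tau>) \<and>
     (\<forall>\<sigma>\<in>K. \<forall>\<tau>\<in>K. \<sigma> \<noteq> {} \<longrightarrow> \<tau> \<noteq> {} \<longrightarrow> gt (mu gt \<sigma>) (mu gt \<tau>) \<longrightarrow> gt \<sigma> \<tau>)"

definition free_pair :: "'a set set \<Rightarrow> 'a set \<Rightarrow> 'a set \<Rightarrow> bool" where
  "free_pair K \<sigma> \<tau> \<longleftrightarrow> \<sigma> \<in> K \<and> \<tau> \<noteq> {} \<and> \<tau> \<in> facets \<sigma> \<and>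
     simplicial_complex (K - {\<sigma>, \<tau>})"

definition elementary_collapse :: "'a set set \<Rightarrow> 'a set set \<Rightarrow> bool" where
  "elementary_collapse K L \<longleftrightarrow> (\<exists>\<sigma> \<tau>. free_pair K \<sigma> \<tau> \<and> L = K - {\<sigma>, \<tau>})"

definition collapses_on :: "'a set set \<Rightarrow> 'a set set \<Rightarrow> bool" where
  "collapses_on K L \<longleftrightarrow> elementary_collapse\<^sup>*\<^sup>* K L"

end

theory Submission imports Defs begin

locale HC =
  fixes K :: "'a set set" and gt :: "'a set \<Rightarrow> 'a set \<Rightarrow> bool" and r :: nat
  assumes sc: "simplicial_complex K" and her: "hereditary K gt" and rpos: "r > 0"
  and un: "\<forall>\<sigma>\<in>K. \<forall>\<tau>\<in>K. sdim \<sigma> = sdim \<tau> \<and> sdim \<sigma> \<ge> int r \<and> mu gt \<sigma> = mu gt \<tau>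
           \<longrightarrow> \<sigma> \<union> \<tau> \<in> K"
begin

lemma subK: "s \<in> K \<Longrightarrow> t \<subseteq> s \<Longrightarrow> t \<in> K"
  using sc unfolding simplicial_complex_def by blast
lemma finK: "s \<in> K \<Longrightarrow> finite s"
  using sc unfolding simplicial_complex_def by blast
lemma finiteK: "finite K"
  using sc unfolding simplicial_complex_def by blast
lemma sto: "strict_total_order_on K gt"
  using her unfolding hereditary_def by (rule conjunct1)
lemma irr0: "\<forall>s\<in>K. \<not> gt s s"
  using sto unfolding strict_total_order_on_def by blast
lemma trans0: "\<forall>s\<in>K. \<forall>t\<in>K. \<forall>u\<in>K. gt s t \<longrightarrow> gt t u \<longrightarrow> gt s u"
  using sto unfolding strict_total_order_on_def by blast
lemma tot0: "\<forall>s\<in>K. \<forall>t\<in>K. s \<noteq> t \<longrightarrow> gt s t \<or> gt t s"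
  using sto unfolding strict_total_order_on_def by blast
lemma dim0: "\<forall>s\<in>K. \<forall>t\<in>K. sdim s > sdim t \<longrightarrow> gt s t"
  using her unfolding hereditary_def by blast
lemma hmu0: "\<forall>s\<in>K. \<forall>t\<in>K. s \<noteq> {} \<longrightarrow> t \<noteq> {} \<longrightarrow> gt (mu gt s) (mu gt t) \<longrightarrow> gt s t"
  using her unfolding hereditary_def by blast
lemma irr: "s \<in> K \<Longrightarrow> \<not> gt s s"
  using irr0 by blast
lemma trans: "s \<in> K \<Longrightarrow> t \<in> K \<Longrightarrow> u \<in> K \<Longrightarrow> gt s t \<Longrightarrow> gt t u \<Longrightarrow> gt s u"
  using trans0 by blast
lemma tot: "s \<in> K \<Longrightarrow> t \<in> K \<Longrightarrow> s \<noteq> t \<Longrightarrow> gt s t \<or> gt t s"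
  using tot0 by blast
lemma asym: "s \<in> K \<Longrightarrow> t \<in> K \<Longrightarrow> gt s t \<Longrightarrow> \<not> gt t s"
  using trans irr by blast
lemma cardgt: "s \<in> K \<Longrightarrow> t \<in> K \<Longrightarrow> card s > card t \<Longrightarrow> gt s t"
  using dim0 unfolding sdim_def by simp
lemma hmu: "s \<in> K \<Longrightarrow> t \<in> K \<Longrightarrow> s \<noteq> {} \<Longrightarrow> t \<noteq> {} \<Longrightarrow> gt (mu gt s) (mu gt t) \<Longrightarrow> gt s t"
  using hmu0 by blast

lemma exmax: "finite S \<Longrightarrow> S \<noteq> {} \<Longrightarrow> S \<subseteq> K \<Longrightarrow> \<exists>x\<in>S. \<forall>y\<in>S. y \<noteq> x \<longrightarrow> gt x y"
proof (induction S rule: finite_ne_induct)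
  case (singleton x) then show ?case by auto
next
  case (insert x F)
  then obtain m where m: "m \<in> F" "\<forall>y\<in>F. y \<noteq> m \<longrightarrow> gt m y" by auto
  show ?case
  proof (cases "gt x m")
    case True
    have "\<forall>y\<in>insert x F. y \<noteq> x \<longrightarrow> gt x y"
    proof (intro ballI impI)
      fix y assume y: "y \<in> insert x F" "y \<noteq> x"
      then have yF: "y \<in> F" by blast
      show "gt x y"
      proof (cases "y = m")
        case True then show ?thesis using \<open>gt x m\<close> by simp
      next
        case False then show ?thesis using trans[of x m y] m yF insert.prems True by blast
      qed
    qed
    then show ?thesis by blast
  next
    case False
    then have xm: "gt m x" using tot[of x m] m insert by blast
    have "\<forall>y\<in>insert x F. y \<noteq> m \<longrightarrow> gt m y" using xm m by blast
    then show ?thesis using m by blast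
  qed
qed

lemma exmin: "finite S \<Longrightarrow> S \<noteq> {} \<Longrightarrow> S \<subseteq> K \<Longrightarrow> \<exists>x\<in>S. \<forall>y\<in>S. y \<noteq> x \<longrightarrow> gt y x"
proof (induction S rule: finite_ne_induct)
  case (singleton x) then show ?case by auto
next
  case (insert x F)
  then obtain m where m: "m \<in> F" "\<forall>y\<in>F. y \<noteq> m \<longrightarrow> gt y m" by auto
  show ?case
  proof (cases "gt m x")
    case True
    have "\<forall>y\<in>insert x F. y \<noteq> x \<longrightarrow> gt y x"
    proof (intro ballI impI)
      fix y assume y: "y \<in> insert x F" "y \<noteq> x"
      then have yF: "y \<in> F" by blast
      show "gt y x"
      proof (cases "y = m")
        case True then show ?thesis using \<open>gt m x\<close> by simp
      next
        case False then show ?thesis using trans[of y m x] m yF insert.prems True by blast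
      qed
    qed
    then show ?thesis by blast
  next
    case False
    then have xm: "gt x m" using tot[of x m] m insert by blast
    have "\<forall>y\<in>insert x F. y \<noteq> m \<longrightarrow> gt y m" using xm m by blast
    then show ?thesis using m by blast
  qed
qed

lemma facet_remove: "finite s \<Longrightarrow> x \<in> s \<Longrightarrow> s - {x} \<in> facets s"
  unfolding facets_def using card_Suc_Diff1 by fastforce

lemma facet_form: assumes "finite s" "t \<in> facets s" shows "\<exists>x. x \<notin> t \<and> s = insert x t"
proof -
  have ts: "t \<subseteq> s" and c: "card t + 1 = card s" using assms unfolding facets_def by auto
  have "card (s - t) = 1" using card_Diff_subset[OF finite_subset[OF ts assms(1)] ts] c by simp
  then obtain x where "s - t = {x}" by (rule card_1_singletonE)
  then show ?thesis using ts by blast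
qed

lemma facets_K: "s \<in> K \<Longrightarrow> facets s \<subseteq> K"
  unfolding facets_def using subK by blast

lemma fin_facets: "finite s \<Longrightarrow> finite (facets s)"
  unfolding facets_def by simp

lemma M0: assumes "s \<in> K" "s \<noteq> {}"
  shows "mu gt s \<in> facets s \<and> (\<forall>t\<in>facets s. t \<noteq> mu gt s \<longrightarrow> gt (mu gt s) t)"
proof -
  have fin: "finite (facets s)" using fin_facets finK assms(1) by blast
  obtain x where "x \<in> s" using assms by auto
  then have "s - {x} \<in> facets s" using facet_remove[OF finK[OF assms(1)]] by blast
  then have ne: "facets s \<noteq> {}" by blast
  have FK: "facets s \<subseteq> K" using facets_K assms(1) by blast
  obtain x0 where x0: "x0 \<in> facets s" "\<forall>y\<in>facets s. y \<noteq> x0 \<longrightarrow> gt x0 y"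
    using exmax[OF fin ne FK] by blast
  have "mu gt s = x0" unfolding mu_def
  proof (rule the_equality)
    show "x0 \<in> facets s \<and> (\<forall>\<rho>\<in>facets s. \<rho> \<noteq> x0 \<longrightarrow> gt x0 \<rho>)" using x0 by blast
  next
    fix t assume t: "t \<in> facets s \<and> (\<forall>\<rho>\<in>facets s. \<rho> \<noteq> t \<longrightarrow> gt t \<rho>)"
    show "t = x0"
    proof (rule ccontr)
      assume tx: "t \<noteq> x0"
      have tK: "t \<in> K" and x0K: "x0 \<in> K" using t x0 FK by auto
      have "gt t x0" using t x0(1) tx by blast
      moreover have "gt x0 t" using x0(2) t tx by blast
      ultimately show False using asym[OF tK x0K] by blast
    qed
  qed
  then show ?thesis using x0 by simp
qed

lemma mu_sub: "s \<in> K \<Longrightarrow> s \<noteq> {} \<Longrightarrow> mu gt s \<subseteq> s \<and> card (mu gt s) + 1 = card s \<and> mu gt s \<in> K"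
proof -
  assume a: "s \<in> K" "s \<noteq> {}"
  have "mu gt s \<in> facets s" using M0[OF a] by (rule conjunct1)
  then have "mu gt s \<subseteq> s \<and> card (mu gt s) + 1 = card s" unfolding facets_def by simp
  then show ?thesis using subK[OF a(1)] by simp
qed

lemma F1: "s \<in> K \<Longrightarrow> j \<le> card s \<Longrightarrow> (mu gt ^^ j) s \<in> K \<and> (mu gt ^^ j) s \<subseteq> s \<and> card ((mu gt ^^ j) s) = card s - j"
proof (induction j)
  case 0 then show ?case by simp
next
  case (Suc j)
  let ?Z = "(mu gt ^^ j) s"
  have Z: "?Z \<in> K" "?Z \<subseteq> s" "card ?Z = card s - j" using Suc by auto
  then have "?Z \<noteq> {}" using Suc.prems by auto
  then show ?case using mu_sub[OF Z(1)] Z by auto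
qed

lemma Mono: "F \<in> K \<Longrightarrow> G \<in> K \<Longrightarrow> card F = card G \<Longrightarrow> F = G \<or> gt G F \<Longrightarrow> j \<le> card F \<Longrightarrow>
  (mu gt ^^ j) F = (mu gt ^^ j) G \<or> gt ((mu gt ^^ j) G) ((mu gt ^^ j) F)"
proof (induction j arbitrary: F G)
  case 0 then show ?case by simp
next
  case (Suc j)
  have ne: "F \<noteq> {}" "G \<noteq> {}" using Suc.prems by auto
  note mF = mu_sub[OF Suc.prems(1) ne(1)] and mG = mu_sub[OF Suc.prems(2) ne(2)]
  have "mu gt F = mu gt G \<or> gt (mu gt G) (mu gt F)"
  proof (rule ccontr)
    assume "\<not> ?thesis"
    then have "gt (mu gt F) (mu gt G)" using tot mF mG by blast
    then have "gt F G" using hmu Suc.prems ne by blast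
    then show False using Suc.prems(4) irr asym Suc.prems(1,2) by blast
  qed
  moreover have "(mu gt ^^ j) (mu gt F) = (mu gt ^^ j) (mu gt G) \<or> gt ((mu gt ^^ j) (mu gt G)) ((mu gt ^^ j) (mu gt F))"
    using Suc.IH[of "mu gt F" "mu gt G"] mF mG Suc.prems calculation by simp
  moreover have "\<And>X. (mu gt ^^ Suc j) X = (mu gt ^^ j) (mu gt X)" by (simp only: funpow_Suc_right comp_def)
  ultimately show ?case by metis
qed

lemma Max: "s \<in> K \<Longrightarrow> w \<subseteq> s \<Longrightarrow> card w + j = card s \<Longrightarrow> w = (mu gt ^^ j) s \<or> gt ((mu gt ^^ j) s) w"
proof (induction j arbitrary: s w)
  case 0
  then have "w = s" using card_subset_eq[OF finK[OF 0(1)] 0(2)] by simp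
  then show ?case by simp
next
  case (Suc j)
  have fs: "finite s" using finK Suc.prems by blast
  have "w \<noteq> s" using Suc.prems(3) by auto
  then obtain x where x: "x \<in> s" "x \<notin> w" using Suc.prems(2) by blast
  let ?F = "s - {x}"
  have Ff: "?F \<in> facets s" using facet_remove[OF fs x(1)] by blast
  then have FK: "?F \<in> K" using facets_K Suc.prems by blast
  have cF: "card ?F = card s - 1" using fs x by simp
  have wF: "w \<subseteq> ?F" using x(2) Suc.prems(2) by blast
  have cw: "card w + j = card ?F" using cF Suc.prems(3) by simp
  have jF: "j \<le> card ?F" using cw by simp
  have IH: "w = (mu gt ^^ j) ?F \<or> gt ((mu gt ^^ j) ?F) w" using Suc.IH[OF FK wF cw] .
  have ne: "s \<noteq> {}" using x by auto
  have M0s: "\<forall>t\<in>facets s. t \<noteq> mu gt s \<longrightarrow> gt (mu gt s) t" using M0[OF Suc.prems(1) ne] by (rule conjunct2)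
  have "?F \<noteq> mu gt s \<longrightarrow> gt (mu gt s) ?F" using M0s Ff by (rule bspec)
  then have M: "?F = mu gt s \<or> gt (mu gt s) ?F" by argo
  have ms: "mu gt s \<subseteq> s" "card (mu gt s) + 1 = card s" "mu gt s \<in> K" using mu_sub[OF Suc.prems(1) ne] by auto
  have cm: "card ?F = card (mu gt s)" using cF ms(2) by simp
  have Mo: "(mu gt ^^ j) ?F = (mu gt ^^ j) (mu gt s) \<or> gt ((mu gt ^^ j) (mu gt s)) ((mu gt ^^ j) ?F)"
    using Mono[OF FK ms(3) cm M jF] .
  have K1: "(mu gt ^^ j) ?F \<in> K" using F1[OF FK jF] by blast
  have K2: "(mu gt ^^ j) (mu gt s) \<in> K" using F1[OF ms(3)] jF cm by simp
  have wK: "w \<in> K" using subK[OF Suc.prems(1) Suc.prems(2)] .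
  have "w = (mu gt ^^ j) (mu gt s) \<or> gt ((mu gt ^^ j) (mu gt s)) w"
  proof -
    { assume "w \<noteq> (mu gt ^^ j) (mu gt s)"
      have "gt ((mu gt ^^ j) (mu gt s)) w"
      proof (cases "w = (mu gt ^^ j) ?F")
        case True then show ?thesis using Mo \<open>w \<noteq> (mu gt ^^ j) (mu gt s)\<close> by simp
      next
        case False
        then have g1: "gt ((mu gt ^^ j) ?F) w" using IH by simp
        show ?thesis
        proof (cases "(mu gt ^^ j) ?F = (mu gt ^^ j) (mu gt s)")
          case True then show ?thesis using g1 by simp
        next
          case False then have "gt ((mu gt ^^ j) (mu gt s)) ((mu gt ^^ j) ?F)" using Mo by simp
          then show ?thesis using trans[OF K2 K1 wK] g1 by blast
        qed
      qed }
    then show ?thesis by blast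
  qed
  moreover have "(mu gt ^^ Suc j) s = (mu gt ^^ j) (mu gt s)" by (simp only: funpow_Suc_right comp_def)
  ultimately show ?case by metis
qed


lemma S: assumes eK: "e \<in> K" and ab: "a \<noteq> b" "a \<notin> m" "b \<notin> m" and e: "e = insert a (insert b m)"
  and ma: "mu gt (insert a m) = m" and mb: "mu gt (insert b m) = m"
  shows "mu gt e = insert a m \<or> mu gt e = insert b m"
proof -
  have fe: "finite e" using finK[OF eK] .
  have fm: "finite m" using fe e by simp
  define n where "n = card e"
  have n: "n = card m + 2" using fm ab e n_def by simp
  have aK: "insert a m \<in> K" using subK[OF eK] e by blast
  have bK: "insert b m \<in> K" using subK[OF eK] e by blast
  have mK: "m \<in> K" using subK[OF eK] e by blast
  have P: "k \<le> card m \<Longrightarrow> (mu gt ^^ (n - k)) e \<subseteq> m" for k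
  proof (induction k)
    case 0
    have "(mu gt ^^ n) e \<in> K" "card ((mu gt ^^ n) e) = 0" using F1[OF eK, of n] n_def by auto
    then have "(mu gt ^^ n) e = {}" using finK by auto
    then show ?case by simp
  next
    case (Suc k)
    define j where "j = n - Suc k"
    have jn: "n - k = Suc j" using Suc.prems n j_def by simp
    have j2: "j \<ge> 2" using Suc.prems n j_def by simp
    have IH: "(mu gt ^^ Suc j) e \<subseteq> m" using Suc.IH Suc.prems jn by simp
    let ?Z = "(mu gt ^^ j) e"
    have Z: "?Z \<in> K" "?Z \<subseteq> e" "card ?Z = n - j" using F1[OF eK, of j] n_def j_def by auto
    have cZ: "card ?Z = Suc k" using Z(3) j_def Suc.prems n by simp
    have Zne: "?Z \<noteq> {}" using cZ by auto
    have "(mu gt ^^ Suc j) e = mu gt ?Z" by simp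
    then have mZ: "mu gt ?Z \<subseteq> m" using IH by simp
    have fZ: "mu gt ?Z \<in> facets ?Z" using M0[OF Z(1) Zne] by (rule conjunct1)
    obtain x where x: "x \<notin> mu gt ?Z" "?Z = insert x (mu gt ?Z)" using facet_form[OF finK[OF Z(1)] fZ] by blast
    have xe: "x \<in> e"
    proof -
      have "x \<in> insert x (mu gt ?Z)" by simp
      then have "x \<in> ?Z" by (subst x(2))
      then show ?thesis using Z(2) by blast
    qed
    have Zx: "?Z \<subseteq> insert x m"
    proof -
      have "insert x (mu gt ?Z) \<subseteq> insert x m" using mZ by blast
      then show ?thesis by (rule ord_eq_le_trans[OF x(2)])
    qed
    obtain \<rho> where rho: "\<rho> = insert a m \<or> \<rho> = insert b m" "?Z \<subseteq> \<rho>"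
    proof (cases "x = a")
      case True
      then have "?Z \<subseteq> insert a m" using Zx by simp
      then show ?thesis using that[of "insert a m"] by blast
    next
      case False
      then have "x \<in> insert b m" using xe e by blast
      then have "insert x m \<subseteq> insert b m" by blast
      then have "?Z \<subseteq> insert b m" using Zx by (rule order_trans[rotated])
      then show ?thesis using that[of "insert b m"] by blast
    qed
    have rK: "\<rho> \<in> K" using rho aK bK by blast
    have mr: "mu gt \<rho> = m" using rho ma mb by blast
    have cr: "card \<rho> = card m + 1" using rho fm ab by auto
    have re: "\<rho> \<subseteq> e" using rho e by blast
    have c1: "card ?Z + (j - 1) = card \<rho>" using cZ cr j_def n Suc.prems by simp
    let ?W = "(mu gt ^^ (j - 1)) \<rho>"
    have A: "?Z = ?W \<or> gt ?W ?Z" using Max[OF rK rho(2) c1] .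
    have W: "?W \<in> K" "?W \<subseteq> \<rho>" "card ?W = card \<rho> - (j - 1)" using F1[OF rK, of "j - 1"] c1 by auto
    have c2: "card ?W + j = card e" using W(3) cr j_def n n_def Suc.prems by simp
    have B: "?W = ?Z \<or> gt ?Z ?W" using Max[OF eK _ c2] W(2) re by blast
    have ZW: "?Z = ?W" using A B asym[OF Z(1) W(1)] by blast
    have "j - 1 = Suc (j - 2)" using j2 by simp
    then have "?W = (mu gt ^^ (j - 2)) (mu gt \<rho>)" by (simp only: funpow_Suc_right comp_def)
    also have "\<dots> = (mu gt ^^ (j - 2)) m" using mr by simp
    finally have "?W \<subseteq> m" using F1[OF mK, of "j - 2"] j_def n by simp
    then show ?case using ZW j_def by simp
  qed
  have sub2: "(mu gt ^^ 2) e \<subseteq> m" using P[of "card m"] n by simp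
  have c2: "card ((mu gt ^^ 2) e) = card m" using F1[OF eK, of 2] n n_def by simp
  have eq2: "(mu gt ^^ 2) e = m" using card_subset_eq[OF fm sub2 c2] .
  have ene: "e \<noteq> {}" using e by blast
  have f: "mu gt e \<subseteq> e" "card (mu gt e) + 1 = card e" "mu gt e \<in> K" using mu_sub[OF eK ene] by auto
  have fne: "mu gt e \<noteq> {}" using f(2) n n_def by auto
  have "(mu gt ^^ 2) e = mu gt (mu gt e)" by (simp add: numeral_2_eq_2)
  then have mmf: "mu gt (mu gt e) = m" using eq2 by simp
  have mf: "m \<subseteq> mu gt e" using mu_sub[OF f(3) fne] mmf by auto
  have cf: "card (mu gt e - m) = 1" using card_Diff_subset[OF fm mf] f(2) n n_def by simp
  then obtain x where x: "mu gt e - m = {x}" by (rule card_1_singletonE)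
  have "x \<in> e" "x \<notin> m" using x f(1) by auto
  then have "x = a \<or> x = b" using e by blast
  moreover have "mu gt e = insert x m" using x mf by blast
  ultimately show ?thesis by blast
qed


definition minc :: "'a set \<Rightarrow> bool" where
  "minc \<rho> \<longleftrightarrow> (\<forall>w\<in>K. w \<noteq> {} \<longrightarrow> mu gt w = mu gt \<rho> \<longrightarrow> w = \<rho> \<or> gt w \<rho>)"

definition Inv :: "'a set set \<Rightarrow> bool" where
  "Inv L \<longleftrightarrow> L \<subseteq> K \<and> simplicial_complex L \<and>
     (\<forall>\<rho>\<in>K. card \<rho> \<ge> r + 1 \<longrightarrow> \<rho> \<notin> L \<longrightarrow> minc \<rho> \<longrightarrow> mu gt \<rho> \<notin> L)"

lemma KC:
  assumes I: "Inv L" and sL: "s \<in> L" and cs: "card s \<ge> r + 1"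
    and mx: "\<forall>\<rho>\<in>L. card \<rho> \<ge> r + 1 \<longrightarrow> \<rho> = s \<or> gt s \<rho>"
    and wL: "w \<in> L" and mw: "mu gt s \<subseteq> w"
  shows "w = mu gt s \<or> w = s"
proof (rule ccontr)
  assume nc: "\<not> (w = mu gt s \<or> w = s)"
  have LK: "L \<subseteq> K" using I unfolding Inv_def by blast
  have sK: "s \<in> K" using LK sL by blast
  have wK: "w \<in> K" using LK wL by blast
  have sne: "s \<noteq> {}" using cs by auto
  have ms: "mu gt s \<subseteq> s" "card (mu gt s) + 1 = card s" "mu gt s \<in> K" using mu_sub[OF sK sne] by auto
  have fw: "finite w" using finK[OF wK] .
  have "mu gt s \<subset> w" using mw nc by blast
  then have "card (mu gt s) < card w" using psubset_card_mono[OF fw] by blast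
  then have cws: "card w \<ge> card s" using ms(2) by simp
  have ws: "w \<noteq> s" using nc by blast
  have cw1: "card w \<ge> r + 1" using cws cs by simp
  have gsw: "gt s w" using mx wL cw1 ws by blast
  have cwe: "card w = card s"
  proof (rule ccontr)
    assume "card w \<noteq> card s"
    then have "card w > card s" using cws by simp
    then have "gt w s" using cardgt[OF wK sK] by blast
    then show False using asym[OF sK wK] gsw by blast
  qed
  have wne: "w \<noteq> {}" using cwe sne sK finK by auto
  have mfw: "mu gt s \<in> facets w" unfolding facets_def using mw ms(2) cwe by simp
  have muw: "mu gt w = mu gt s"
  proof (rule ccontr)
    assume ne: "mu gt w \<noteq> mu gt s"
    have "\<forall>t\<in>facets w. t \<noteq> mu gt w \<longrightarrow> gt (mu gt w) t" using M0[OF wK wne] by (rule conjunct2)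
    then have "mu gt s \<noteq> mu gt w \<longrightarrow> gt (mu gt w) (mu gt s)" using mfw by (rule bspec)
    then have "gt (mu gt w) (mu gt s)" using ne by argo
    then have "gt w s" using hmu[OF wK sK wne sne] by blast
    then show False using asym[OF sK wK] gsw by blast
  qed
  have sd: "sdim s = sdim w" using cwe unfolding sdim_def by simp
  have sr: "sdim s \<ge> int r" using cs unfolding sdim_def by simp
  have uK: "s \<union> w \<in> K" using un sK wK sd sr muw by metis
  have mfs: "mu gt s \<in> facets s" using M0[OF sK sne] by (rule conjunct1)
  obtain a where a: "a \<notin> mu gt s" "s = insert a (mu gt s)" using facet_form[OF finK[OF sK] mfs] by blast
  obtain b where b: "b \<notin> mu gt s" "w = insert b (mu gt s)" using facet_form[OF fw mfw] by blast
  have ab: "a \<noteq> b" using a b ws by metis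
  define m where "m = mu gt s"
  define e where "e = insert a (insert b m)"
  have ue: "s \<union> w = e" unfolding e_def m_def using a(2) b(2) by blast
  have eK: "e \<in> K" using uK ue by simp
  have ma: "mu gt (insert a m) = m" using a(2) m_def by metis
  have mb: "mu gt (insert b m) = m" using b(2) muw m_def by metis
  have S1: "mu gt e = insert a m \<or> mu gt e = insert b m"
    using S[OF eK ab _ _ e_def ma mb] a(1) b(1) m_def by blast
  have sa: "s = insert a m" using a(2) m_def by simp
  have wb: "w = insert b m" using b(2) m_def by simp
  have ene: "e \<noteq> {}" unfolding e_def by blast
  have fm: "finite m" using finK[OF sK] sa by simp
  have am: "a \<notin> m" "b \<notin> m" using a(1) b(1) m_def by auto
  have ce: "card e = card m + 2" unfolding e_def using am ab fm by simp
  have csm: "card s = card m + 1" using sa am fm by simp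
  have sfe: "s \<in> facets e" unfolding facets_def using ce csm sa e_def by auto
  have mue: "mu gt e = s"
  proof (rule ccontr)
    assume "mu gt e \<noteq> s"
    then have "mu gt e = w" using S1 sa wb by simp
    have "\<forall>t\<in>facets e. t \<noteq> mu gt e \<longrightarrow> gt (mu gt e) t" using M0[OF eK ene] by (rule conjunct2)
    then have "s \<noteq> mu gt e \<longrightarrow> gt (mu gt e) s" using sfe by (rule bspec)
    then have "gt w s" using \<open>mu gt e = w\<close> ws by simp
    then show False using asym[OF sK wK] gsw by blast
  qed
  define C where "C = {x\<in>K. x \<noteq> {} \<and> mu gt x = s}"
  have Cf: "finite C" unfolding C_def using finiteK by simp
  have Cne: "C \<noteq> {}" unfolding C_def using eK ene mue by blast
  have CK: "C \<subseteq> K" unfolding C_def by blast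
  obtain y where y: "y \<in> C" "\<forall>z\<in>C. z \<noteq> y \<longrightarrow> gt z y" using exmin[OF Cf Cne CK] by blast
  have yK: "y \<in> K" and yne: "y \<noteq> {}" and muy: "mu gt y = s" using y(1) unfolding C_def by auto
  have mincy: "minc y" unfolding minc_def
  proof (intro ballI impI)
    fix z assume "z \<in> K" "z \<noteq> {}" "mu gt z = mu gt y"
    then have "z \<in> C" unfolding C_def using muy by simp
    then show "z = y \<or> gt z y" using y(2) by blast
  qed
  have cy: "card y = card s + 1" using mu_sub[OF yK yne] muy by simp
  have cy1: "card y \<ge> r + 1" using cy cs by simp
  have yL: "y \<notin> L"
  proof
    assume "y \<in> L"
    then have "y = s \<or> gt s y" using mx cy1 by blast
    moreover have "gt y s" using cardgt[OF yK sK] cy by simp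
    ultimately show False using asym[OF sK yK] cy by auto
  qed
  have "mu gt y \<notin> L" using I yK cy1 yL mincy unfolding Inv_def by blast
  then show False using muy sL by simp
qed


lemma step:
  assumes I: "Inv L" and sL: "s \<in> L" and cs: "card s \<ge> r + 1"
    and mx: "\<forall>\<rho>\<in>L. card \<rho> \<ge> r + 1 \<longrightarrow> \<rho> = s \<or> gt s \<rho>"
  shows "free_pair L s (mu gt s) \<and> Inv (L - {s, mu gt s})"
proof -
  have LK: "L \<subseteq> K" and scL: "simplicial_complex L" using I unfolding Inv_def by blast+
  have sK: "s \<in> K" using LK sL by blast
  have sne: "s \<noteq> {}" using cs by auto
  have ms: "mu gt s \<subseteq> s" "card (mu gt s) + 1 = card s" "mu gt s \<in> K" using mu_sub[OF sK sne] by auto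
  have mfs: "mu gt s \<in> facets s" using M0[OF sK sne] by (rule conjunct1)
  have mne: "mu gt s \<noteq> {}" using ms(2) cs rpos by auto
  have kc: "\<And>w. w \<in> L \<Longrightarrow> mu gt s \<subseteq> w \<Longrightarrow> w = mu gt s \<or> w = s" using KC[OF I sL cs mx] by blast
  let ?L' = "L - {s, mu gt s}"
  have sc1: "finite L" and sc2: "\<forall>x\<in>L. finite x" and sc3: "{} \<in> L"
    and sc4: "\<forall>x\<in>L. \<forall>t. t \<subseteq> x \<longrightarrow> t \<in> L"
    using scL unfolding simplicial_complex_def by simp_all
  have scL': "simplicial_complex ?L'"
    unfolding simplicial_complex_def
  proof (intro conjI ballI allI impI)
    show "finite ?L'" using sc1 by simp
  next
    fix x assume "x \<in> ?L'" then show "finite x" using sc2 by simp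
  next
    show "{} \<in> ?L'" using sc3 sne mne by simp
  next
    fix w t assume w: "w \<in> ?L'" and tw: "t \<subseteq> w"
    have tL: "t \<in> L" using sc4 w tw by blast
    have t1: "t \<noteq> s"
    proof
      assume "t = s"
      then have "mu gt s \<subseteq> w" using ms(1) tw by blast
      then show False using kc w by blast
    qed
    have t2: "t \<noteq> mu gt s"
    proof
      assume "t = mu gt s"
      then show False using kc w tw by blast
    qed
    show "t \<in> ?L'" using tL t1 t2 by blast
  qed
  have fp: "free_pair L s (mu gt s)" unfolding free_pair_def using sL mne mfs scL' by blast
  have inv3: "\<forall>\<rho>\<in>K. card \<rho> \<ge> r + 1 \<longrightarrow> \<rho> \<notin> ?L' \<longrightarrow> minc \<rho> \<longrightarrow> mu gt \<rho> \<notin> ?L'"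
  proof (intro ballI impI)
    fix \<rho> assume rK: "\<rho> \<in> K" and cr: "card \<rho> \<ge> r + 1" and rL': "\<rho> \<notin> ?L'" and mr: "minc \<rho>"
    show "mu gt \<rho> \<notin> ?L'"
    proof (cases "\<rho> \<in> L")
      case False
      then have "mu gt \<rho> \<notin> L" using I rK cr mr unfolding Inv_def by blast
      then show ?thesis by blast
    next
      case True
      then have "\<rho> = s \<or> \<rho> = mu gt s" using rL' by blast
      moreover have "\<rho> \<noteq> mu gt s"
      proof
        assume rm: "\<rho> = mu gt s"
        let ?m = "mu gt s"
        have mK: "?m \<in> K" using ms(3) .
        have mm: "mu gt ?m \<subseteq> ?m" "card (mu gt ?m) + 1 = card ?m" "mu gt ?m \<in> K" using mu_sub[OF mK mne] by auto
        have mfm: "mu gt ?m \<in> facets ?m" using M0[OF mK mne] by (rule conjunct1)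
        obtain a where a: "a \<notin> mu gt ?m" "?m = insert a (mu gt ?m)" using facet_form[OF finK[OF mK] mfm] by blast
        obtain b where b: "b \<notin> ?m" "s = insert b ?m" using facet_form[OF finK[OF sK] mfs] by blast
        define x where "x = mu gt ?m"
        define c where "c = insert b x"
        have fx: "finite x" using finK[OF mm(3)] x_def by simp
        have bx: "b \<notin> x" using b(1) mm(1) x_def by blast
        have aim: "a \<in> ?m" using a(2) by (metis insertI1)
        have ab: "a \<noteq> b" using aim b(1) by blast
        have ac: "a \<notin> c" unfolding c_def using ab a(1) x_def by blast
        have cs': "c \<subseteq> s" unfolding c_def x_def using b(2) mm(1) by blast
        have cK: "c \<in> K" using subK[OF sK cs'] .
        have cc: "card c = card ?m" unfolding c_def using fx bx mm(2) x_def by simp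
        have cfs: "c \<in> facets s" unfolding facets_def using cs' cc ms(2) by simp
        have cm: "c \<noteq> ?m" using ac aim by blast
        have "\<forall>t\<in>facets s. t \<noteq> ?m \<longrightarrow> gt ?m t" using M0[OF sK sne] by (rule conjunct2)
        then have "c \<noteq> ?m \<longrightarrow> gt ?m c" using cfs by (rule bspec)
        then have gmc: "gt ?m c" using cm by argo
        have cne: "c \<noteq> {}" unfolding c_def by blast
        have xfc: "x \<in> facets c" unfolding facets_def c_def using fx bx by auto
        have muc: "mu gt c = x"
        proof (rule ccontr)
          assume ne: "mu gt c \<noteq> x"
          have "\<forall>t\<in>facets c. t \<noteq> mu gt c \<longrightarrow> gt (mu gt c) t" using M0[OF cK cne] by (rule conjunct2)
          then have "x \<noteq> mu gt c \<longrightarrow> gt (mu gt c) x" using xfc by (rule bspec)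
          then have "gt (mu gt c) (mu gt ?m)" using ne x_def by simp
          then have "gt c ?m" using hmu[OF cK mK cne mne] by blast
          then show False using asym[OF mK cK] gmc by blast
        qed
        have "c = \<rho> \<or> gt c \<rho>" using mr cK cne muc x_def rm unfolding minc_def by blast
        then show False using cm rm gmc asym[OF mK cK] by blast
      qed
      ultimately have "\<rho> = s" by blast
      then show ?thesis by blast
    qed
  qed
  have "Inv ?L'" unfolding Inv_def using LK scL' inv3 by blast
  then show ?thesis using fp by blast
qed

lemma main: "finite L \<Longrightarrow> Inv L \<Longrightarrow> \<exists>L'. elementary_collapse\<^sup>*\<^sup>* L L' \<and> L' \<subseteq> L \<and> simplicial_complex L' \<and> (\<forall>s\<in>L'. card s \<le> r)"
proof (induction "card L" arbitrary: L rule: less_induct)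
  case less
  show ?case
  proof (cases "\<forall>s\<in>L. card s \<le> r")
    case True
    then show ?thesis using less.prems unfolding Inv_def by blast
  next
    case False
    define B where "B = {\<rho>\<in>L. card \<rho> \<ge> r + 1}"
    have Bf: "finite B" unfolding B_def using less.prems by simp
    have Bne: "B \<noteq> {}" unfolding B_def using False by force
    have BK: "B \<subseteq> K" unfolding B_def using less.prems unfolding Inv_def by blast
    obtain s where s: "s \<in> B" "\<forall>y\<in>B. y \<noteq> s \<longrightarrow> gt s y" using exmax[OF Bf Bne BK] by blast
    have sL: "s \<in> L" and cs: "card s \<ge> r + 1" using s(1) unfolding B_def by auto
    have mx: "\<forall>\<rho>\<in>L. card \<rho> \<ge> r + 1 \<longrightarrow> \<rho> = s \<or> gt s \<rho>" using s(2) unfolding B_def by blast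
    have st: "free_pair L s (mu gt s)" "Inv (L - {s, mu gt s})" using step[OF less.prems(2) sL cs mx] by blast+
    have "L - {s, mu gt s} \<subset> L" using sL by blast
    then have lt: "card (L - {s, mu gt s}) < card L" using psubset_card_mono[OF less.prems(1)] by blast
    obtain L' where L': "elementary_collapse\<^sup>*\<^sup>* (L - {s, mu gt s}) L'" "L' \<subseteq> L - {s, mu gt s}"
      "simplicial_complex L'" "\<forall>s\<in>L'. card s \<le> r"
      using less.hyps[OF lt _ st(2)] less.prems(1) by blast
    have "elementary_collapse L (L - {s, mu gt s})" unfolding elementary_collapse_def using st(1) by blast
    then have "elementary_collapse\<^sup>*\<^sup>* L L'" using L'(1) by (rule converse_rtranclp_into_rtranclp)
    then show ?thesis using L' by blast
  qed
qed

end

theorem lemma7: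
  fixes K :: "'a set set" and gt :: "'a set \<Rightarrow> 'a set \<Rightarrow> bool" and r :: nat
  assumes "simplicial_complex K"
    and "hereditary K gt"
    and "r > 0"
    and "\<forall>\<sigma>\<in>K. \<forall>\<tau>\<in>K. sdim \<sigma> = sdim \<tau> \<and> sdim \<sigma> \<ge> int r \<and> mu gt \<sigma> = mu gt \<tau>
           \<longrightarrow> \<sigma> \<union> \<tau> \<in> K"
  shows "\<exists>L. collapses_on K L \<and> L \<subseteq> K \<and> simplicial_complex L \<and> (\<forall>\<sigma>\<in>L. sdim \<sigma> < int r)"
proof -
  interpret HC K gt r using assms by unfold_locales
  have "Inv K" unfolding Inv_def using assms(1) by blast
  then obtain L where L: "elementary_collapse\<^sup>*\<^sup>* K L" "L \<subseteq> K" "simplicial_complex L" "\<forall>s\<in>L. card s \<le> r"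
    using main finiteK by blast
  have "\<forall>\<sigma>\<in>L. sdim \<sigma> < int r" using L(4) unfolding sdim_def by fastforce
  then show ?thesis using L unfolding collapses_on_def by blast
qed

end
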